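(* Let $\Gamma$ be a simple, undirected, connected graph with $p\ge 2$ vertices and maximum degree $\Delta\ge 1$. Then $\gamma_{[3R]}(\Gamma)\le 3p-3\Delta+1$.
   Context: For a graph $\Gamma=(V,E)$ and $h:V\to\{0,1,2,3,4\}$, let $AN(v)=\{w\in N(v):h(w)\ge 1\}$, $AN[v]=AN(v)\cup\{v\}$ and $h(S)=\sum_{u\in S}h(u)$. $h$ is a triple Roman dominating function (3RDF) if every $v$ with $h(v)<3$ satisfies $h(AN[v])\ge|AN(v)|+3$. The triple Roman domination number $\gamma_{[3R]}(\Gamma)$ is the minimum weight $h(V)$ of a 3RDF of $\Gamma$. *)

theory Defs
  imports Main
begin

definition simple_graph :: "'a set \<Rightarrow> 'a set set \<Rightarrow> bool" where
  "simple_graph V E \<longleftrightarrow> finite V \<and> (\<forall>e\<in>E. e \<subseteq> V \<and> card e = 2)"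

definition nbhd :: "'a set \<Rightarrow> 'a set set \<Rightarrow> 'a \<Rightarrow> 'a set" where
  "nbhd V E v = {w\<in>V. {v, w} \<in> E}"

definition degree :: "'a set \<Rightarrow> 'a set set \<Rightarrow> 'a \<Rightarrow> nat" where
  "degree V E v = card (nbhd V E v)"

definition max_degree :: "'a set \<Rightarrow> 'a set set \<Rightarrow> nat" where
  "max_degree V E = Max (degree V E ` V)"

definition connected_graph :: "'a set \<Rightarrow> 'a set set \<Rightarrow> bool" where
  "connected_graph V E \<longleftrightarrow>
     (\<forall>u\<in>V. \<forall>v\<in>V. (u, v) \<in> {(x, y). x \<in> V \<and> y \<in> V \<and> {x, y} \<in> E}\<^sup>*)"

definition active_nbhd :: "'a set \<Rightarrow> 'a set set \<Rightarrow> ('a \<Rightarrow> nat) \<Rightarrow> 'a \<Rightarrow> 'a set" where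
  "active_nbhd V E h v = {w \<in> nbhd V E v. h w \<ge> 1}"

definition is_3RDF :: "'a set \<Rightarrow> 'a set set \<Rightarrow> ('a \<Rightarrow> nat) \<Rightarrow> bool" where
  "is_3RDF V E h \<longleftrightarrow>
     (\<forall>v\<in>V. h v \<le> 4) \<and> (\<forall>v. v \<notin> V \<longrightarrow> h v = 0) \<and>
     (\<forall>v\<in>V. h v < 3 \<longrightarrow>
        sum h (insert v (active_nbhd V E h v)) \<ge> card (active_nbhd V E h v) + 3)"

definition weight :: "'a set \<Rightarrow> ('a \<Rightarrow> nat) \<Rightarrow> nat" where
  "weight V h = sum h V"

definition triple_roman_domination_number :: "'a set \<Rightarrow> 'a set set \<Rightarrow> nat" where
  "triple_roman_domination_number V E = Min {weight V h | h. is_3RDF V E h}"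

end

theory Submission
  imports Defs
begin

lemma not_self_nbhd:
  assumes "simple_graph V E" shows "w \<notin> nbhd V E w"
  using assms by (auto simp: nbhd_def simple_graph_def)

theorem proposition7:
  fixes V :: "'a set" and E :: "'a set set"
  assumes "simple_graph V E"
    and "connected_graph V E"
    and "card V \<ge> 2"
    and "max_degree V E \<ge> 1"
  shows "int (triple_roman_domination_number V E) \<le> 3 * int (card V) - 3 * int (max_degree V E) + 1"
proof -
  have fin: "finite V" using assms(1) by (simp add: simple_graph_def)
  have ne: "V \<noteq> {}" using assms(3) by auto
  have "max_degree V E \<in> degree V E ` V"
    unfolding max_degree_def using fin ne by (intro Max_in) auto
  then obtain v where vV: "v \<in> V" and dv: "degree V E v = max_degree V E" by auto
  define N where "N = nbhd V E v"
  have NV: "N \<subseteq> V" by (auto simp: N_def nbhd_def)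
  have vN: "v \<notin> N" using not_self_nbhd[OF assms(1)] by (simp add: N_def)
  have finN: "finite N" using NV fin finite_subset by blast
  have cN: "card N = max_degree V E" using dv by (simp add: N_def degree_def)
  define h where "h x = (if x = v then 4 else if x \<in> N then 0 else if x \<in> V then 3 else (0::nat))" for x
  have h3: "is_3RDF V E h"
    unfolding is_3RDF_def
  proof (intro conjI ballI allI impI)
    fix w assume "w \<in> V" "h w < 3"
    then have wN: "w \<in> N" "w \<noteq> v" by (auto simp: h_def split: if_splits)
    define A where "A = active_nbhd V E h w"
    have finA: "finite A" using fin by (auto simp: A_def active_nbhd_def nbhd_def)
    have wA: "w \<notin> A" using not_self_nbhd[OF assms(1)] by (auto simp: A_def active_nbhd_def)
    have vA: "v \<in> A" using wN vV by (auto simp: A_def active_nbhd_def nbhd_def N_def h_def insert_commute)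
    have ge1: "\<forall>x\<in>A - {v}. 1 \<le> h x" by (auto simp: A_def active_nbhd_def)
    have e1: "sum h (insert w A) = h w + sum h A" using finA wA by simp
    have e2: "sum h A = h v + sum h (A - {v})" using finA vA by (simp add: sum.remove)
    have e3: "sum h (A - {v}) \<ge> card (A - {v})" using ge1 sum_mono[of "A - {v}" "\<lambda>_. 1" h] by auto
    have "sum h (insert w A) \<ge> h w + h v + card (A - {v})" using e1 e2 e3 by linarith
    moreover have "card (A - {v}) + 1 = card A" using finA vA
      using card_Suc_Diff1[OF finA vA] by simp
    ultimately show "card (active_nbhd V E h w) + 3 \<le> sum h (insert w (active_nbhd V E h w))"
      by (simp add: A_def h_def)
  qed (use vV NV in \<open>auto simp: h_def\<close>)
  have "weight V h = h v + sum h (V - {v})" using fin vV by (simp add: weight_def sum.remove)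
  also have "sum h (V - {v}) = sum h N + sum h (V - {v} - N)"
    using sum.subset_diff[of N "V - {v}" h] fin NV vN by (auto simp: add.commute)
  also have "sum h N = 0" using vN by (intro sum.neutral) (auto simp: h_def)
  also have "sum h (V - {v} - N) = sum (\<lambda>_. 3) (V - {v} - N)" by (intro sum.cong) (auto simp: h_def)
  finally have W0: "weight V h = h v + 3 * card (V - {v} - N)" by simp
  have "card (V - {v} - N) = card V - 1 - card N"
    using fin NV vN vV by (simp add: card_Diff_subset finN card_Diff_singleton subset_Diff_insert)
  with W0 have W: "weight V h = 4 + 3 * (card V - 1 - card N)" by (simp add: h_def)
  have cle: "card N + 1 \<le> card V"
  proof -
    have "N \<subseteq> V - {v}" using NV vN by auto
    then have "card N \<le> card (V - {v})" using fin by (intro card_mono) auto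
    moreover have "card (V - {v}) + 1 = card V" using vV fin by (metis card_Suc_Diff1 Suc_eq_plus1)
    ultimately show ?thesis by linarith
  qed
  have finS: "finite {weight V g | g. is_3RDF V E g}"
  proof (rule finite_subset)
    show "{weight V g | g. is_3RDF V E g} \<subseteq> {..4 * card V}"
    proof
      fix x assume "x \<in> {weight V g | g. is_3RDF V E g}"
      then obtain g where xg: "x = weight V g" and "is_3RDF V E g" by blast
      then have "\<forall>x\<in>V. g x \<le> 4" by (simp add: is_3RDF_def)
      then have "sum g V \<le> sum (\<lambda>_. 4) V" by (intro sum_mono) auto
      thus "x \<in> {..4 * card V}" by (simp add: weight_def xg)
    qed
  qed simp
  have "triple_roman_domination_number V E \<le> weight V h"
    unfolding triple_roman_domination_number_def using finS h3 by (intro Min_le) auto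
  thus ?thesis using W cle cN by linarith
qed

end
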